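(* Let $m\ge1$ and let $N_m$ be the semiring of polynomials in $X_1,\ldots,X_m$ with nonnegative integer coefficients. Let $P\in N_m$ be a sum of $n$ monomials (possibly repeated, each with coefficient $1$), where $n$ is prime. Then $P$ has unique factorisation inside $N_m$, i.e. any two factorisations of $P$ into irreducible elements of $N_m$ coincide up to the order of the factors.
   Context: An element $Q\in N_m$ with $Q\neq 0,1$ is irreducible in $N_m$ if whenever $Q=ST$ with $S,T\in N_m$, one of $S,T$ equals $1$. The number of monomials of $P$ (counted with repetition) equals $P(1,\ldots,1)$. *)

theory Defs
  imports Main "HOL-Library.Poly_Mapping" "HOL-Library.Multiset" "HOL-Computational_Algebra.Primes"
begin

text \<open>Polynomials in variables X_0,...,X_(m-1) with natural-number coefficients:
  finitely supported maps from exponent vectors exponent vectors to nat coefficients,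
  with the usual (convolution) product.\<close>
type_synonym npoly = "(nat \<Rightarrow>\<^sub>0 nat) \<Rightarrow>\<^sub>0 nat"

definition Nm :: "nat \<Rightarrow> npoly set" where
  "Nm m = {P :: npoly. \<forall>mon \<in> Poly_Mapping.keys P. Poly_Mapping.keys (mon :: nat \<Rightarrow>\<^sub>0 nat) \<subseteq> {..<m}}"

definition irreducible_Nm :: "nat \<Rightarrow> npoly \<Rightarrow> bool" where
  "irreducible_Nm m Q \<longleftrightarrow> Q \<in> Nm m \<and> Q \<noteq> 0 \<and> Q \<noteq> 1 \<and>
     (\<forall>S \<in> Nm m. \<forall>T \<in> Nm m. Q = S * T \<longrightarrow> S = 1 \<or> T = 1)"

text \<open>Number of monomials counted with repetition, i.e. P(1,...,1).\<close>
definition num_monomials :: "npoly \<Rightarrow> nat" where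
  "num_monomials P = (\<Sum>mon \<in> Poly_Mapping.keys P. Poly_Mapping.lookup P mon)"

end

theory Submission
  imports Defs
begin

lemma lookup_single_mult:
  "Poly_Mapping.lookup (Poly_Mapping.single a c * (Q::npoly)) k = c * (\<Sum>q. Poly_Mapping.lookup Q q when k = a + q)"
  by (simp add: lookup_mult lookup_single when_mult mult_when)

lemma lookup_single_mult_shift:
  "Poly_Mapping.lookup (Poly_Mapping.single a c * (Q::npoly)) (a + j) = c * Poly_Mapping.lookup Q j"
  by (simp add: lookup_single_mult)

lemma lookup_single_mult_nz:
  assumes "Poly_Mapping.lookup (Poly_Mapping.single a c * (Q::npoly)) k \<noteq> 0"
  shows "\<exists>j. k = a + j"
proof (rule ccontr)
  assume "\<not> ?thesis"
  hence "\<And>q. (Poly_Mapping.lookup Q q when k = a + q) = 0" by auto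
  thus False using assms by (simp add: lookup_single_mult)
qed

lemma num_sum_superset:
  assumes "finite S" "Poly_Mapping.keys P \<subseteq> S"
  shows "num_monomials P = sum (Poly_Mapping.lookup P) S"
  unfolding num_monomials_def
  using assms by (intro sum.mono_neutral_left) (auto simp: in_keys_iff)

lemma num_add: "num_monomials (P + Q) = num_monomials P + num_monomials Q"
proof -
  let ?S = "Poly_Mapping.keys P \<union> Poly_Mapping.keys Q"
  have "num_monomials (P + Q) = sum (Poly_Mapping.lookup (P+Q)) ?S"
    by (rule num_sum_superset) (auto simp: in_keys_iff lookup_add)
  also have "\<dots> = sum (Poly_Mapping.lookup P) ?S + sum (Poly_Mapping.lookup Q) ?S"
    by (simp add: lookup_add sum.distrib)
  also have "\<dots> = num_monomials P + num_monomials Q"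
    by (simp add: num_sum_superset[symmetric])
  finally show ?thesis .
qed

lemma num_single: "num_monomials (Poly_Mapping.single a c) = c"
  by (simp add: num_monomials_def)

lemma num_zero: "num_monomials 0 = 0"
  by (simp add: num_monomials_def)

lemma update_eq_add: "a \<notin> Poly_Mapping.keys f \<Longrightarrow> Poly_Mapping.update a b f = f + Poly_Mapping.single a b"
  by (rule poly_mapping_eqI) (auto simp: lookup_update lookup_add lookup_single in_keys_iff when_def)

lemma num_single_mult: "num_monomials (Poly_Mapping.single a c * (Q::npoly)) = c * num_monomials Q"
proof (induction Q rule: update_induct)
  case const
  then show ?case by (simp add: num_zero)
next
  case (update f x y)
  then show ?case by (simp add: update_eq_add distrib_left mult_single num_add num_single)
qed

lemma num_mult: "num_monomials ((P::npoly) * Q) = num_monomials P * num_monomials Q"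
proof (induction P rule: update_induct)
  case const
  then show ?case by (simp add: num_zero)
next
  case (update f x y)
  then show ?case by (simp add: update_eq_add distrib_right num_add num_single num_single_mult)
qed

lemma num_eq_0: "num_monomials P = 0 \<longleftrightarrow> P = 0"
  by (auto simp: num_monomials_def in_keys_iff intro: poly_mapping_eqI)

lemma num_one: "num_monomials 1 = 1"
  by (metis num_single single_one)

lemma num_prod_list: "num_monomials (prod_list (fs::npoly list)) = prod_list (map num_monomials fs)"
  by (induction fs) (auto simp: num_mult num_one)

definition Xv :: "nat \<Rightarrow> npoly" where
  "Xv i = Poly_Mapping.single (Poly_Mapping.single i 1) 1"

lemma num_one_single:
  assumes "num_monomials P = 1"
  shows "\<exists>k. P = Poly_Mapping.single k 1"
proof -
  have "P \<noteq> 0" using assms num_zero by auto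
  then obtain k where k: "k \<in> Poly_Mapping.keys P" by (metis all_not_in_conv keys_eq_empty)
  have "1 = Poly_Mapping.lookup P k + (\<Sum>x\<in>Poly_Mapping.keys P - {k}. Poly_Mapping.lookup P x)"
    using assms k unfolding num_monomials_def by (simp add: sum.remove)
  moreover have "Poly_Mapping.lookup P k \<noteq> 0" using k by (simp add: in_keys_iff)
  ultimately have 1: "Poly_Mapping.lookup P k = 1"
    and 2: "(\<Sum>x\<in>Poly_Mapping.keys P - {k}. Poly_Mapping.lookup P x) = 0" by linarith+
  have "\<forall>x\<in>Poly_Mapping.keys P - {k}. Poly_Mapping.lookup P x = 0" using 2 by simp
  hence "\<And>x. x \<noteq> k \<Longrightarrow> Poly_Mapping.lookup P x = 0" by (auto simp: in_keys_iff)
  hence "P = Poly_Mapping.single k 1"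
    by (intro poly_mapping_eqI) (auto simp: lookup_single when_def 1)
  thus ?thesis by blast
qed

lemma single_one_eq_1_iff: "(Poly_Mapping.single k (1::nat) :: npoly) = 1 \<longleftrightarrow> k = 0"
proof
  assume eq: "(Poly_Mapping.single k (1::nat) :: npoly) = 1"
  have "Poly_Mapping.lookup (Poly_Mapping.single k (1::nat) :: npoly) k = Poly_Mapping.lookup (1::npoly) k"
    by (simp only: eq)
  thus "k = 0" by (simp add: lookup_one when_def split: if_splits)
qed (metis single_one)

lemma irreducible_num1:
  assumes irr: "irreducible_Nm m f" and n1: "num_monomials f = 1"
  shows "\<exists>i<m. f = Xv i"
proof -
  obtain k where fk: "f = Poly_Mapping.single k 1" using num_one_single[OF n1] by blast
  have fN: "f \<in> Nm m" and f1: "f \<noteq> 1" and irr': "\<forall>S \<in> Nm m. \<forall>T \<in> Nm m. f = S * T \<longrightarrow> S = 1 \<or> T = 1"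
    using irr by (auto simp: irreducible_Nm_def)
  have k0: "k \<noteq> 0" using f1 fk single_one_eq_1_iff by blast
  have kk: "Poly_Mapping.keys k \<subseteq> {..<m}" using fN fk by (simp add: Nm_def)
  obtain i where i: "i \<in> Poly_Mapping.keys k" using k0 by (metis all_not_in_conv keys_eq_empty)
  hence im: "i < m" using kk by auto
  define k' where "k' = Poly_Mapping.update i (Poly_Mapping.lookup k i - 1) k"
  have ki: "Poly_Mapping.lookup k i \<ge> 1" using i by (simp add: in_keys_iff)
  have ksplit: "k = Poly_Mapping.single i 1 + k'"
    unfolding k'_def using ki
    by (intro poly_mapping_eqI) (auto simp: lookup_add lookup_single lookup_update when_def)
  have "f = Xv i * Poly_Mapping.single k' 1"
    using ksplit by (simp add: fk Xv_def mult_single)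
  moreover have "Xv i \<in> Nm m" using im by (simp add: Xv_def Nm_def)
  moreover have "Poly_Mapping.single k' 1 \<in> Nm m"
    using kk im by (auto simp: Nm_def k'_def keys_update)
  moreover have "Xv i \<noteq> 1" unfolding Xv_def single_one_eq_1_iff
    by (metis lookup_single_eq lookup_zero one_neq_zero)
  ultimately have "Poly_Mapping.single k' 1 = (1::npoly)" using irr' by blast
  hence "k' = 0" using single_one_eq_1_iff by blast
  hence "f = Xv i" using fk ksplit by (simp add: Xv_def)
  thus ?thesis using im by blast
qed

lemma lookup_map_key': "inj f \<Longrightarrow> Poly_Mapping.lookup (Poly_Mapping.map_key f p) k = Poly_Mapping.lookup p (f k)"
  by (simp add: map_key.rep_eq)

lemma keys_add_nat: "Poly_Mapping.keys ((a::nat \<Rightarrow>\<^sub>0 nat) + b) = Poly_Mapping.keys a \<union> Poly_Mapping.keys b"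
  by (auto simp: in_keys_iff lookup_add)

lemma split_ei:
  assumes "Poly_Mapping.lookup (k::nat \<Rightarrow>\<^sub>0 nat) i \<noteq> 0"
  shows "k = Poly_Mapping.single i 1 + (k - Poly_Mapping.single i 1)"
  using assms by (intro poly_mapping_eqI) (auto simp: lookup_add lookup_minus lookup_single when_def)

lemma irreducible_has_zero_exp:
  assumes irr: "irreducible_Nm m Q" and n1: "num_monomials Q \<noteq> 1"
  shows "\<exists>k\<in>Poly_Mapping.keys Q. Poly_Mapping.lookup k i = 0"
proof (rule ccontr)
  assume "\<not> ?thesis"
  hence all: "\<And>k. k \<in> Poly_Mapping.keys Q \<Longrightarrow> Poly_Mapping.lookup k i \<noteq> 0" by auto
  have QN: "Q \<in> Nm m" and Q0: "Q \<noteq> 0" and irr': "\<forall>S \<in> Nm m. \<forall>T \<in> Nm m. Q = S * T \<longrightarrow> S = 1 \<or> T = 1"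
    using irr by (auto simp: irreducible_Nm_def)
  obtain k0 where k0: "k0 \<in> Poly_Mapping.keys Q" using Q0 by (metis all_not_in_conv keys_eq_empty)
  have "i \<in> Poly_Mapping.keys k0" using all[OF k0] by (simp add: in_keys_iff)
  hence im: "i < m" using QN k0 by (auto simp: Nm_def)
  define sh where "sh = (\<lambda>k::nat \<Rightarrow>\<^sub>0 nat. Poly_Mapping.single i 1 + k)"
  have injsh: "inj sh" unfolding sh_def by (rule injI) simp
  define R where "R = Poly_Mapping.map_key sh Q"
  have lR: "Poly_Mapping.lookup R k = Poly_Mapping.lookup Q (sh k)" for k
    unfolding R_def using injsh by (rule lookup_map_key')
  have QR: "Q = Xv i * R"
  proof (rule poly_mapping_eqI)
    fix k
    show "Poly_Mapping.lookup Q k = Poly_Mapping.lookup (Xv i * R) k"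
    proof (cases "\<exists>j. k = Poly_Mapping.single i 1 + j")
      case True
      then obtain j where j: "k = Poly_Mapping.single i 1 + j" by blast
      show ?thesis unfolding Xv_def j lookup_single_mult_shift lR sh_def by simp
    next
      case False
      hence "Poly_Mapping.lookup (Xv i * R) k = 0" unfolding Xv_def using lookup_single_mult_nz by blast
      moreover have "Poly_Mapping.lookup Q k = 0"
      proof (rule ccontr)
        assume "Poly_Mapping.lookup Q k \<noteq> 0"
        hence "Poly_Mapping.lookup k i \<noteq> 0" using all by (simp add: in_keys_iff)
        thus False using False split_ei by blast
      qed
      ultimately show ?thesis by simp
    qed
  qed
  have kR: "Poly_Mapping.keys R = sh -` Poly_Mapping.keys Q"
    unfolding R_def using injsh by (rule keys_map_key)
  have RN: "R \<in> Nm m"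
    unfolding Nm_def
  proof (rule CollectI, rule ballI)
    fix mon assume "mon \<in> Poly_Mapping.keys R"
    hence "sh mon \<in> Poly_Mapping.keys Q" using kR by auto
    hence "Poly_Mapping.keys (sh mon) \<subseteq> {..<m}" using QN by (auto simp: Nm_def)
    thus "Poly_Mapping.keys mon \<subseteq> {..<m}" by (auto simp: sh_def keys_add_nat)
  qed
  have XN: "Xv i \<in> Nm m" using im by (simp add: Xv_def Nm_def)
  have X1: "Xv i \<noteq> 1" unfolding Xv_def single_one_eq_1_iff
    by (metis lookup_single_eq lookup_zero one_neq_zero)
  have "R \<noteq> 1"
  proof
    assume "R = 1"
    hence "Q = Xv i" using QR by simp
    thus False using n1 by (simp add: Xv_def num_single)
  qed
  thus False using irr' RN XN X1 QR by blast
qed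

lemma unique_shift:
  assumes eq: "Poly_Mapping.single a 1 * Q = Poly_Mapping.single b 1 * (Q'::npoly)"
    and irr: "irreducible_Nm m Q" "irreducible_Nm m Q'"
    and n1: "num_monomials Q \<noteq> 1" "num_monomials Q' \<noteq> 1"
  shows "a = b \<and> Q = Q'"
proof -
  have le: "Poly_Mapping.lookup a i \<le> Poly_Mapping.lookup b i"
    if eq: "Poly_Mapping.single a 1 * Q = Poly_Mapping.single b 1 * (Q'::npoly)"
      and irr: "irreducible_Nm m Q'" and n1: "num_monomials Q' \<noteq> 1" for a b Q Q' i
  proof -
    obtain k where k: "k \<in> Poly_Mapping.keys Q'" "Poly_Mapping.lookup k i = 0"
      using irreducible_has_zero_exp[OF irr n1] by blast
    have "Poly_Mapping.lookup (Poly_Mapping.single b 1 * Q') (b + k) \<noteq> 0"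
      using k by (simp add: lookup_single_mult_shift in_keys_iff)
    hence "Poly_Mapping.lookup (Poly_Mapping.single a 1 * Q) (b + k) \<noteq> 0" using eq by simp
    then obtain j where "b + k = a + j" using lookup_single_mult_nz by blast
    hence "Poly_Mapping.lookup (b + k) i = Poly_Mapping.lookup (a + j) i" by simp
    thus ?thesis using k by (simp add: lookup_add)
  qed
  have ab: "a = b"
    by (rule poly_mapping_eqI, rule antisym) (use le eq irr n1 in metis)+
  have "Q = Q'"
  proof (rule poly_mapping_eqI)
    fix j
    have "Poly_Mapping.lookup (Poly_Mapping.single a 1 * Q) (a + j) = Poly_Mapping.lookup (Poly_Mapping.single b 1 * Q') (a + j)"
      using eq by simp
    thus "Poly_Mapping.lookup Q j = Poly_Mapping.lookup Q' j" using ab by (simp add: lookup_single_mult_shift)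
  qed
  with ab show ?thesis by simp
qed

definition expv :: "nat list \<Rightarrow> (nat \<Rightarrow>\<^sub>0 nat)" where
  "expv xs = sum_list (map (\<lambda>i. Poly_Mapping.single i 1) xs)"

lemma single01: "Poly_Mapping.single 0 (Suc 0) = (1::npoly)"
  by (metis One_nat_def single_one)

lemma prod_Xv: "prod_list (map Xv xs) = Poly_Mapping.single (expv xs) 1"
  by (induction xs) (simp_all add: expv_def Xv_def mult_single single01)

lemma lookup_expv: "Poly_Mapping.lookup (expv xs) j = count (mset xs) j"
  by (induction xs) (auto simp: expv_def lookup_add lookup_single when_def)

lemma irr_nonzero: "irreducible_Nm m f \<Longrightarrow> num_monomials f \<noteq> 0"
  by (simp add: irreducible_Nm_def num_eq_0)

lemma factors_num1:
  assumes "\<forall>f\<in>set fs. irreducible_Nm m f" "num_monomials (prod_list fs) = 1"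
  shows "\<exists>xs. fs = map Xv xs"
  using assms
proof (induction fs)
  case Nil
  then show ?case by simp
next
  case (Cons f fs)
  have "num_monomials f * num_monomials (prod_list fs) = 1"
    using Cons.prems by (simp add: num_mult)
  hence f1: "num_monomials f = 1" and r1: "num_monomials (prod_list fs) = 1" by simp_all
  have "irreducible_Nm m f" using Cons.prems by simp
  then obtain i where "f = Xv i" using irreducible_num1 f1 by blast
  moreover obtain xs where "fs = map Xv xs" using Cons r1 by auto
  ultimately have "f # fs = map Xv (i # xs)" by simp
  thus ?case by (rule exI)
qed

lemma factors_prime:
  assumes "\<forall>f\<in>set fs. irreducible_Nm m f" "prime (num_monomials (prod_list fs))"
  shows "\<exists>xs Q. mset fs = mset (map Xv xs) + {#Q#} \<and> irreducible_Nm m Q \<and>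
     num_monomials Q = num_monomials (prod_list fs) \<and>
     prod_list fs = Poly_Mapping.single (expv xs) 1 * Q"
  using assms
proof (induction fs)
  case Nil
  then show ?case by (simp add: num_one)
next
  case (Cons f fs)
  have pe: "num_monomials (prod_list (f # fs)) = num_monomials f * num_monomials (prod_list fs)"
    by (simp add: num_mult)
  hence "num_monomials f = 1 \<or> num_monomials (prod_list fs) = 1"
    using Cons.prems(2) prime_product[of "num_monomials f" "num_monomials (prod_list fs)"] by simp
  thus ?case
  proof
    assume f1: "num_monomials f = 1"
    have "irreducible_Nm m f" using Cons.prems by simp
    then obtain i where fi: "f = Xv i" using irreducible_num1 f1 by blast
    have "prime (num_monomials (prod_list fs))" using Cons.prems(2) pe f1 by simp
    then obtain xs Q where IH: "mset fs = mset (map Xv xs) + {#Q#}" "irreducible_Nm m Q"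
      "num_monomials Q = num_monomials (prod_list fs)"
      "prod_list fs = Poly_Mapping.single (expv xs) 1 * Q"
      using Cons by auto
    have "mset (f # fs) = mset (map Xv (i # xs)) + {#Q#}" using IH fi by simp
    moreover have "prod_list (f # fs) = Poly_Mapping.single (expv (i # xs)) 1 * Q"
    proof -
      have e: "Xv i * Poly_Mapping.single (expv xs) 1 = Poly_Mapping.single (expv (i # xs)) 1"
        by (simp add: Xv_def expv_def mult_single)
      have "prod_list (f # fs) = Xv i * (Poly_Mapping.single (expv xs) 1 * Q)" using IH(4) fi by simp
      also have "\<dots> = Poly_Mapping.single (expv (i # xs)) 1 * Q" by (simp only: mult.assoc[symmetric] e)
      finally show ?thesis .
    qed
    moreover have "num_monomials Q = num_monomials (prod_list (f # fs))" using IH pe f1 by simp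
    ultimately show ?case using IH(2) by blast
  next
    assume r1: "num_monomials (prod_list fs) = 1"
    obtain xs where fs: "fs = map Xv xs" using factors_num1 Cons.prems r1 by force
    have "mset (f # fs) = mset (map Xv xs) + {#f#}" using fs by simp
    moreover have "prod_list (f # fs) = Poly_Mapping.single (expv xs) 1 * f"
      using fs by (simp add: prod_Xv mult.commute)
    moreover have "num_monomials f = num_monomials (prod_list (f # fs))" using pe r1 by simp
    moreover have "irreducible_Nm m f" using Cons.prems by simp
    ultimately show ?case by blast
  qed
qed

theorem mainTheorem4:
  fixes m n :: nat and P :: npoly
  assumes "m \<ge> 1"
    and "P \<in> Nm m"
    and "num_monomials P = n"
    and "prime n"
  shows "\<forall>fs gs. (\<forall>f \<in> set fs. irreducible_Nm m f) \<and> prod_list fs = P \<and>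
                 (\<forall>g \<in> set gs. irreducible_Nm m g) \<and> prod_list gs = P
                 \<longrightarrow> mset fs = mset gs"
proof (intro allI impI)
  fix fs gs :: "npoly list"
  assume H: "(\<forall>f \<in> set fs. irreducible_Nm m f) \<and> prod_list fs = P \<and>
                 (\<forall>g \<in> set gs. irreducible_Nm m g) \<and> prod_list gs = P"
  have n1: "n \<noteq> 1" using assms(4) by auto
  obtain xs Q where A: "mset fs = mset (map Xv xs) + {#Q#}" "irreducible_Nm m Q"
     "num_monomials Q = n" "P = Poly_Mapping.single (expv xs) 1 * Q"
    using factors_prime[of fs m] H assms(3,4) by auto
  obtain js Q' where B: "mset gs = mset (map Xv js) + {#Q'#}" "irreducible_Nm m Q'"
     "num_monomials Q' = n" "P = Poly_Mapping.single (expv js) 1 * Q'"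
    using factors_prime[of gs m] H assms(3,4) by auto
  have "expv xs = expv js \<and> Q = Q'"
    using unique_shift[of "expv xs" Q "expv js" Q' m] A B n1 by simp
  hence "mset xs = mset js" and QQ: "Q = Q'"
    by (auto intro!: multiset_eqI simp: lookup_expv[symmetric])
  thus "mset fs = mset gs" using A(1) B(1) by (simp add: mset_map)
qed

end
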